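(* Let $n\ge 6$, $p\in(0,1)$. The mean sum of squared linking numbers of a random linear embedding of an $(n,p)$-graph equals $$\frac{q}{16}\sum_{i=6}^{n}p^i\,\frac{n!}{(n-i)!}\,(i-5),$$ where $q$ is the constant defined in the context.
   Context: An $(n,p)$-graph is a random graph on $n$ vertices in which each pair of vertices is joined by an edge independently with probability $p$; in a random linear embedding its vertices are independent uniform points of $C^3=[0,1]^3$ (independent of edge choices) and edges are straight segments. The mean sum of squared linking numbers is $E\big[\sum \mathrm{lk}(C,C')^2\big]$, the sum over unordered pairs of vertex-disjoint cycles of the embedded graph. For oriented segments $l,l'$, $\epsilon(l,l')$ is the signed crossing in orthogonal projection onto a fixed plane ($0$ if no crossing, else $\pm1$ by the right-hand rule). With $A,B,C,P,Q,R$ independent uniform points of $C^3$ and $X\to Y$ the segment oriented from $X$ to $Y$: $2s=P(\epsilon(A\to B,P\to Q)\ne0)$, $u=E[\epsilon(A\to B,P\to Q)\epsilon(A\to B,Q\to R)]$, $v=E[\epsilon(A\to B,P\to Q)\epsilon(B\to C,Q\to R)]$, $q=s+2(u+v)>0$. *)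

theory Defs
  imports "HOL-Probability.Probability"
begin

type_synonym point = "real^3"

definition cube_unif :: "point measure" where
  "cube_unif = uniform_measure lborel (cbox 0 1)"

text \<open>2D cross product of the projections onto the xy-plane (the fixed projection plane,
  viewed from z = +infinity).\<close>
definition cross2 :: "point \<Rightarrow> point \<Rightarrow> real" where
  "cross2 x y = x$1 * y$2 - x$2 * y$1"

text \<open>Signed crossing eps(a->b, p->q) of the oriented segments a->b and p->q in the
  orthogonal projection onto the xy-plane: 0 if the projections do not cross (at interior
  points), otherwise +1/-1 by the right-hand rule (sign of cross2 (over) (under)).\<close>
definition eps :: "point \<Rightarrow> point \<Rightarrow> point \<Rightarrow> point \<Rightarrow> real" where
  "eps a b p q =
    (let d1 = b - a; d2 = q - p; D = cross2 d1 d2 in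
     if D = 0 then 0 else
     (let t = cross2 (p - a) d2 / D; s = cross2 (p - a) d1 / D in
      if 0 < t \<and> t < 1 \<and> 0 < s \<and> s < 1 then
        (let z1 = a$3 + t * d1$3; z2 = p$3 + s * d2$3 in
         if z1 > z2 then sgn D else if z1 < z2 then - sgn D else 0)
      else 0))"

text \<open>Six independent uniform points A,B,C,P,Q,R = x 0, ..., x 5.\<close>
definition six_pts :: "(nat \<Rightarrow> point) measure" where
  "six_pts = PiM {..<6} (\<lambda>_. cube_unif)"

definition const_s :: real where
  "const_s = measure six_pts {x \<in> space six_pts. eps (x 0) (x 1) (x 3) (x 4) \<noteq> 0} / 2"

definition const_u :: real where
  "const_u = (\<integral>x. eps (x 0) (x 1) (x 3) (x 4) * eps (x 0) (x 1) (x 4) (x 5) \<partial>six_pts)"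

definition const_v :: real where
  "const_v = (\<integral>x. eps (x 0) (x 1) (x 3) (x 4) * eps (x 1) (x 2) (x 4) (x 5) \<partial>six_pts)"

definition const_q :: real where
  "const_q = const_s + 2 * (const_u + const_v)"

definition all_edges :: "nat \<Rightarrow> nat set set" where
  "all_edges n = {{i, j} | i j. i < n \<and> j < n \<and> i \<noteq> j}"

definition cyc_edges :: "nat list \<Rightarrow> nat set set" where
  "cyc_edges vs = {{vs ! i, vs ! ((i + 1) mod length vs)} | i. i < length vs}"

definition is_cycle_list :: "nat set set \<Rightarrow> nat list \<Rightarrow> bool" where
  "is_cycle_list G vs \<longleftrightarrow> length vs \<ge> 3 \<and> distinct vs \<and> cyc_edges vs \<subseteq> G"

definition cycles :: "nat set set \<Rightarrow> nat set set set" where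
  "cycles G = {cyc_edges vs | vs. is_cycle_list G vs}"

definition disj_cycle_pairs :: "nat set set \<Rightarrow> (nat set set \<times> nat set set) set" where
  "disj_cycle_pairs G = {(C, C'). C \<in> cycles G \<and> C' \<in> cycles G \<and> \<Union>C \<inter> \<Union>C' = {}}"

definition lk_list :: "(nat \<Rightarrow> point) \<Rightarrow> nat list \<Rightarrow> nat list \<Rightarrow> real" where
  "lk_list pos vs ws = (1/2) * (\<Sum>i<length vs. \<Sum>j<length ws.
      eps (pos (vs ! i)) (pos (vs ! ((i + 1) mod length vs)))
          (pos (ws ! j)) (pos (ws ! ((j + 1) mod length ws))))"

text \<open>An orientation of a cycle given as edge set (the square of lk does not depend on it).\<close>
definition orient :: "nat set set \<Rightarrow> nat list" where
  "orient C = (SOME vs. length vs \<ge> 3 \<and> distinct vs \<and> cyc_edges vs = C)"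

definition lk :: "(nat \<Rightarrow> point) \<Rightarrow> nat set set \<Rightarrow> nat set set \<Rightarrow> real" where
  "lk pos C C' = lk_list pos (orient C) (orient C')"

text \<open>Sum of squared linking numbers over unordered pairs of vertex-disjoint cycles
  (= half the sum over ordered pairs).\<close>
definition sum_sq_lk :: "nat set set \<Rightarrow> (nat \<Rightarrow> point) \<Rightarrow> real" where
  "sum_sq_lk G pos = (1/2) * (\<Sum>(C, C') \<in> disj_cycle_pairs G. (lk pos C C')^2)"

definition mean_sum_sq_lk :: "nat \<Rightarrow> real \<Rightarrow> real" where
  "mean_sum_sq_lk n p =
    (\<Sum>G \<in> Pow (all_edges n).
       p ^ card G * (1 - p) ^ (card (all_edges n) - card G) *
       (\<integral>pos. sum_sq_lk G pos \<partial>(PiM {..<n} (\<lambda>_. cube_unif))))"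

end

theory Submission
  imports Defs
begin

lemma cube_prob: "prob_space cube_unif"
proof -
  have "(\<Prod>b\<in>Basis. (1::real^3) \<bullet> b) = 1"
    by (rule prod.neutral) (auto simp: Basis_vec_def inner_axis)
  then show ?thesis unfolding cube_unif_def
    by (intro prob_space_uniform_measure) (auto simp add: emeasure_lborel_cbox_eq Basis_vec_def inner_axis)
qed

lemma sets_cube[measurable_cong, simp]: "sets cube_unif = sets borel"
  unfolding cube_unif_def by simp

lemma vec_nth_meas0[measurable]: "(\<lambda>x::real^3. x $ i) \<in> borel_measurable borel"
  by (intro borel_measurable_continuous_onI) (auto intro: continuous_intros)
lemma vec_nth_meas: "f \<in> borel_measurable M \<Longrightarrow> (\<lambda>x. (f x :: real^3) $ i) \<in> borel_measurable M"
  by (rule measurable_compose[OF _ vec_nth_meas0])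

lemma cross2_meas[measurable]:
  "f \<in> borel_measurable M \<Longrightarrow> g \<in> borel_measurable M \<Longrightarrow> (\<lambda>x. cross2 (f x) (g x)) \<in> borel_measurable M"
  unfolding cross2_def by (intro borel_measurable_times borel_measurable_diff vec_nth_meas)

lemma eps_meas[measurable]:
  assumes [measurable]: "a \<in> borel_measurable M" "b \<in> borel_measurable M" "c \<in> borel_measurable M" "d \<in> borel_measurable M"
  shows "(\<lambda>x. eps (a x) (b x) (c x) (d x)) \<in> borel_measurable M"
  unfolding eps_def Let_def
  by measurable

lemma eps_vals: "eps a b c d \<in> {-1,0,1}"
  unfolding eps_def Let_def by (auto simp: sgn_if)

lemma eps_swap1: "eps b a c d = - eps a b c d"
proof -
  define D where "D = cross2 (b-a) (d-c)"
  define t where "t = cross2 (c-a) (d-c) / D"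
  define s where "s = cross2 (c-a) (b-a) / D"
  have D': "cross2 (a-b) (d-c) = -D" by (simp add: D_def cross2_def algebra_simps)
  show ?thesis
  proof (cases "D = 0")
    case True
    then show ?thesis unfolding eps_def Let_def D' by (simp add: D_def)
  next
    case False
    have t': "cross2 (c-b) (d-c) / (-D) = 1 - t"
      using False by (simp add: t_def D_def cross2_def field_simps)
    have s': "cross2 (c-b) (a-b) / (-D) = s"
      using False by (simp add: s_def D_def cross2_def field_simps)
    have z: "b$3 + (1 - t) * (a - b)$3 = a$3 + t * (b-a)$3"
      by (simp add: algebra_simps)
    have tt: "(0 < 1 - t \<and> 1 - t < 1) = (0 < t \<and> t < 1)" by auto
    show ?thesis
      unfolding eps_def Let_def D' t' s' z
      unfolding D_def[symmetric] t_def[symmetric] s_def[symmetric]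
      using False by (auto simp: sgn_if)
  qed
qed
lemma eps_sym: "eps c d a b = eps a b c d"
proof -
  define D where "D = cross2 (b-a) (d-c)"
  define t where "t = cross2 (c-a) (d-c) / D"
  define s where "s = cross2 (c-a) (b-a) / D"
  have D': "cross2 (d-c) (b-a) = -D" by (simp add: D_def cross2_def algebra_simps)
  show ?thesis
  proof (cases "D = 0")
    case True
    then show ?thesis unfolding eps_def Let_def D' by (simp add: D_def)
  next
    case False
    have t': "cross2 (a-c) (b-a) / (-D) = s"
      using False by (simp add: s_def D_def cross2_def field_simps)
    have s': "cross2 (a-c) (d-c) / (-D) = t"
      using False by (simp add: t_def D_def cross2_def field_simps)
    show ?thesis
      unfolding eps_def Let_def D' t' s'
      unfolding D_def[symmetric] t_def[symmetric] s_def[symmetric]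
      using False by (auto simp: sgn_if)
  qed
qed
lemma eps_swap2: "eps a b d c = - eps a b c d"
  by (metis eps_sym eps_swap1)

abbreviation PM :: "nat set \<Rightarrow> (nat \<Rightarrow> point) measure" where
  "PM I \<equiv> PiM I (\<lambda>_. cube_unif)"

lemma PM_prob: "prob_space (PM I)"
  by (intro prob_space_PiM cube_prob)

lemma reindex_meas:
  assumes "t \<in> J \<rightarrow> K"
  shows "(\<lambda>\<omega>. \<lambda>j\<in>J. \<omega> (t j)) \<in> measurable (PM K) (PM J)"
  using assms by (intro measurable_restrict measurable_component_singleton) auto

lemma reindex_int:
  fixes G :: "(nat \<Rightarrow> point) \<Rightarrow> real"
  assumes "inj_on t J" "t \<in> J \<rightarrow> K" "G \<in> borel_measurable (PM J)"
  shows "(\<integral>\<omega>. G (\<lambda>j\<in>J. \<omega> (t j)) \<partial>PM K) = (\<integral>x. G x \<partial>PM J)"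
proof -
  have "distr (PM K) (PM J) (\<lambda>\<omega>. \<lambda>j\<in>J. \<omega> (t j)) = PM J"
    using distr_PiM_reindex[of K "\<lambda>_. cube_unif" t J] assms cube_prob by simp
  then have "(\<integral>x. G x \<partial>PM J) = (\<integral>x. G x \<partial>distr (PM K) (PM J) (\<lambda>\<omega>. \<lambda>j\<in>J. \<omega> (t j)))" by simp
  also have "\<dots> = (\<integral>\<omega>. G (\<lambda>j\<in>J. \<omega> (t j)) \<partial>PM K)"
    by (rule integral_distr[OF reindex_meas[OF assms(2)] assms(3)])
  finally show ?thesis by simp
qed

lemma six_transfer:
  fixes G :: "(nat \<Rightarrow> point) \<Rightarrow> real"
  assumes "J \<subseteq> {..<6}" "inj_on t J" "t \<in> J \<rightarrow> {..<n}" "G \<in> borel_measurable (PM J)"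
  shows "(\<integral>\<omega>. G (\<lambda>j\<in>J. \<omega> (t j)) \<partial>PM {..<n}) = (\<integral>x. G (restrict x J) \<partial>six_pts)"
proof -
  have "(\<integral>\<omega>. G (\<lambda>j\<in>J. \<omega> (t j)) \<partial>PM {..<n}) = (\<integral>x. G x \<partial>PM J)"
    by (rule reindex_int[OF assms(2-4)])
  also have "\<dots> = (\<integral>\<omega>. G (\<lambda>j\<in>J. \<omega> (id j)) \<partial>PM {..<6})"
    using assms(1,4) by (intro reindex_int[symmetric]) auto
  finally show ?thesis unfolding six_pts_def restrict_def id_def by simp
qed

lemma transfer6:
  fixes G F H :: "(nat \<Rightarrow> point) \<Rightarrow> real"
  assumes "J \<subseteq> {..<6}" "inj_on (\<lambda>m. L!m) J" "set L \<subseteq> {..<n}" "length L = 6"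
    "G \<in> borel_measurable (PM J)"
    "\<And>\<omega>. F \<omega> = G (\<lambda>j\<in>J. \<omega> (L!j))" "\<And>x. H x = G (restrict x J)"
  shows "(\<integral>\<omega>. F \<omega> \<partial>PM {..<n}) = (\<integral>x. H x \<partial>six_pts)"
proof -
  have "(\<lambda>m. L!m) \<in> J \<rightarrow> {..<n}"
    using assms(1,3,4) by (auto intro!: nth_mem[THEN subsetD[OF assms(3)]])
  from six_transfer[OF assms(1,2) this assms(5)] show ?thesis
    using assms(6,7) by simp
qed

lemma eps_sq: "(eps a b c d)^2 = (if eps a b c d \<noteq> 0 then 1 else 0)"
  using eps_vals[of a b c d] by auto

lemma const_s_int: "(\<integral>x. (eps (x 0) (x 1) (x 3) (x 4))^2 \<partial>six_pts) = 2 * const_s"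
proof -
  interpret prob_space six_pts unfolding six_pts_def by (rule PM_prob)
  let ?A = "{x \<in> space six_pts. eps (x 0) (x 1) (x 3) (x 4) \<noteq> 0}"
  have A: "?A \<in> sets six_pts" unfolding six_pts_def by measurable
  have "(\<integral>x. (eps (x 0) (x 1) (x 3) (x 4))^2 \<partial>six_pts) = (\<integral>x. indicator ?A x \<partial>six_pts)"
    by (rule Bochner_Integration.integral_cong[OF refl]) (auto simp: eps_sq indicator_def)
  also have "\<dots> = measure six_pts ?A" using A by simp
  finally show ?thesis unfolding const_s_def by simp
qed

lemma test_meas: "0 \<in> J \<Longrightarrow> 1 \<in> J \<Longrightarrow> 3 \<in> J \<Longrightarrow> 4 \<in> J \<Longrightarrow> (\<lambda>y. (eps (y 0) (y 1) (y 3) (y 4))^2) \<in> borel_measurable (PM J)"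
  by measurable

definition nx :: "nat \<Rightarrow> nat \<Rightarrow> nat" where "nx k i = (i + 1) mod k"
definition pv :: "nat \<Rightarrow> nat \<Rightarrow> nat" where "pv k i = (i + k - 1) mod k"

lemma nx_eq: "i < k \<Longrightarrow> nx k i = (if i + 1 < k then i + 1 else 0)"
proof (cases "i + 1 < k")
  case False
  assume "i < k"
  then have "i + 1 = k" using False by arith
  then show ?thesis unfolding nx_def by simp
qed (simp add: nx_def)
lemma pv_eq: "i < k \<Longrightarrow> pv k i = (if i = 0 then k - 1 else i - 1)"
proof -
  assume i: "i < k"
  show ?thesis
  proof (cases "i = 0")
    case True then show ?thesis using i unfolding pv_def by simp
  next
    case False
    then have "i + k - 1 = (i - 1) + k" using i by simp
    then have "pv k i = ((i - 1) + k) mod k" unfolding pv_def by metis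
    also have "\<dots> = i - 1" using i by (simp only: mod_add_self2) simp
    finally show ?thesis using False by simp
  qed
qed
lemma nx_lt: "3 \<le> k \<Longrightarrow> nx k i < k" unfolding nx_def by simp
lemma pv_lt: "3 \<le> k \<Longrightarrow> pv k i < k" unfolding pv_def by simp
lemma nx_pv: "3 \<le> k \<Longrightarrow> i < k \<Longrightarrow> nx k (pv k i) = i"
  by (simp add: nx_eq pv_eq pv_lt; arith)
lemma pv_nx: "3 \<le> k \<Longrightarrow> i < k \<Longrightarrow> pv k (nx k i) = i"
  by (simp add: nx_eq pv_eq nx_lt; arith)
lemma nx_ne: "3 \<le> k \<Longrightarrow> i < k \<Longrightarrow> nx k i \<noteq> i"
  by (simp add: nx_eq; arith)
lemma pv_ne: "3 \<le> k \<Longrightarrow> i < k \<Longrightarrow> pv k i \<noteq> i"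
  by (simp add: pv_eq; arith)
lemma nx_nx_ne: "3 \<le> k \<Longrightarrow> i < k \<Longrightarrow> nx k (nx k i) \<noteq> i"
  by (simp add: nx_eq nx_lt; arith)
lemma pv_ne_nx: "3 \<le> k \<Longrightarrow> i < k \<Longrightarrow> pv k i \<noteq> nx k i"
  by (simp add: nx_eq pv_eq; arith)
lemma nx_inj: "3 \<le> k \<Longrightarrow> i < k \<Longrightarrow> j < k \<Longrightarrow> nx k i = nx k j \<Longrightarrow> i = j"
  by (metis pv_nx)

definition tau :: "nat \<Rightarrow> nat \<Rightarrow> nat \<Rightarrow> nat" where
  "tau a b x = (if x = a then b else if x = b then a else x)"

lemma swap_zero:
  fixes F :: "(nat \<Rightarrow> point) \<Rightarrow> real"
  assumes "a < n" "b < n" "F \<in> borel_measurable (PM {..<n})"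
    "\<And>\<omega>. F (\<lambda>m\<in>{..<n}. \<omega> (tau a b m)) = - F \<omega>"
  shows "(\<integral>\<omega>. F \<omega> \<partial>PM {..<n}) = 0"
proof -
  have inj: "inj_on (tau a b) {..<n}" by (auto simp: inj_on_def tau_def split: if_splits)
  have fn: "tau a b \<in> {..<n} \<rightarrow> {..<n}" using assms(1,2) by (auto simp: tau_def)
  have "(\<integral>\<omega>. F (\<lambda>m\<in>{..<n}. \<omega> (tau a b m)) \<partial>PM {..<n}) = (\<integral>\<omega>. F \<omega> \<partial>PM {..<n})"
    by (rule reindex_int[OF inj fn assms(3)])
  moreover have "(\<lambda>\<omega>. F (\<lambda>m\<in>{..<n}. \<omega> (tau a b m))) = (\<lambda>\<omega>. - F \<omega>)"
    by (rule ext, rule assms(4))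
  ultimately have "(\<integral>\<omega>. - F \<omega> \<partial>PM {..<n}) = (\<integral>\<omega>. F \<omega> \<partial>PM {..<n})" by simp
  then show ?thesis by simp
qed

definition fe :: "(nat \<Rightarrow> point) \<Rightarrow> nat list \<Rightarrow> nat list \<Rightarrow> nat \<Rightarrow> nat \<Rightarrow> real" where
  "fe pos vs ws i j = eps (pos (vs!i)) (pos (vs ! nx (length vs) i)) (pos (ws!j)) (pos (ws ! nx (length ws) j))"

lemma lk_fe: "lk_list pos vs ws = 1/2 * (\<Sum>i<length vs. \<Sum>j<length ws. fe pos vs ws i j)"
  unfolding lk_list_def fe_def nx_def by simp

lemma lk_sq: "(lk_list pos vs ws)^2 = 1/4 * (\<Sum>i<length vs. \<Sum>j<length ws.
   \<Sum>i'<length vs. \<Sum>j'<length ws. fe pos vs ws i j * fe pos vs ws i' j')"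
proof -
  have "(\<Sum>i<length vs. \<Sum>j<length ws. fe pos vs ws i j) * (\<Sum>i'<length vs. \<Sum>j'<length ws. fe pos vs ws i' j')
     = (\<Sum>i<length vs. \<Sum>j<length ws. \<Sum>i'<length vs. \<Sum>j'<length ws. fe pos vs ws i j * fe pos vs ws i' j')"
    unfolding sum_product by (rule sum.cong[OF refl], rule sum.swap)
  then show ?thesis unfolding lk_fe power2_eq_square by simp
qed

lemma comp_meas[measurable]: "i \<in> I \<Longrightarrow> (\<lambda>x. x i) \<in> borel_measurable (PM I)"
  by measurable

lemma pat_s:
  assumes "distinct [a,b,c,d]" "set [a,b,c,d] \<subseteq> {..<n}"
  shows "(\<integral>\<omega>. (eps (\<omega> a) (\<omega> b) (\<omega> c) (\<omega> d))^2 \<partial>PM {..<n}) = 2 * const_s"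
proof -
  have "(\<integral>\<omega>. (eps (\<omega> a) (\<omega> b) (\<omega> c) (\<omega> d))^2 \<partial>PM {..<n}) = (\<integral>x. (eps (x 0) (x 1) (x 3) (x 4))^2 \<partial>six_pts)"
    by (rule transfer6[where J="{0,1,3,4}" and L="[a,b,a,c,d,a]" and G="\<lambda>y. (eps (y 0) (y 1) (y 3) (y 4))^2"])
       (use assms in \<open>auto simp: inj_on_def\<close>)
  then show ?thesis using const_s_int by simp
qed

lemma pat_u:
  assumes "distinct [a,b,c,d,e]" "set [a,b,c,d,e] \<subseteq> {..<n}"
  shows "(\<integral>\<omega>. eps (\<omega> a) (\<omega> b) (\<omega> c) (\<omega> d) * eps (\<omega> a) (\<omega> b) (\<omega> d) (\<omega> e) \<partial>PM {..<n}) = const_u"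
  unfolding const_u_def
  by (rule transfer6[where J="{0,1,3,4,5}" and L="[a,b,a,c,d,e]" and G="\<lambda>y. eps (y 0) (y 1) (y 3) (y 4) * eps (y 0) (y 1) (y 4) (y 5)"])
       (use assms in \<open>auto simp: inj_on_def\<close>)

lemma pat_v:
  assumes "distinct [a,b,c,d,e,f]" "set [a,b,c,d,e,f] \<subseteq> {..<n}"
  shows "(\<integral>\<omega>. eps (\<omega> a) (\<omega> b) (\<omega> d) (\<omega> e) * eps (\<omega> b) (\<omega> c) (\<omega> e) (\<omega> f) \<partial>PM {..<n}) = const_v"
  unfolding const_v_def
  by (rule transfer6[where J="{0,1,2,3,4,5}" and L="[a,b,c,d,e,f]" and G="\<lambda>y. eps (y 0) (y 1) (y 3) (y 4) * eps (y 1) (y 2) (y 4) (y 5)"])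
       (use assms in \<open>auto simp: inj_on_def\<close>)

locale twocyc =
  fixes n :: nat and vs ws :: "nat list"
  assumes dvs: "distinct vs" and dws: "distinct ws" and lvs: "3 \<le> length vs" and lws: "3 \<le> length ws"
   and disj: "set vs \<inter> set ws = {}" and svs: "set vs \<subseteq> {..<n}" and sws: "set ws \<subseteq> {..<n}"
begin

lemma v_lt: "i < length vs \<Longrightarrow> vs!i < n" by (metis lessThan_iff nth_mem subsetD svs)
lemma w_lt: "j < length ws \<Longrightarrow> ws!j < n" by (metis lessThan_iff nth_mem subsetD sws)
lemma v_ne_w: "i < length vs \<Longrightarrow> j < length ws \<Longrightarrow> vs!i \<noteq> ws!j"
  by (metis disjoint_iff nth_mem disj)
lemma w_ne_v: "i < length vs \<Longrightarrow> j < length ws \<Longrightarrow> ws!j \<noteq> vs!i"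
  by (metis v_ne_w)
lemma v_inj: "i < length vs \<Longrightarrow> i' < length vs \<Longrightarrow> vs!i = vs!i' \<longleftrightarrow> i = i'"
  using dvs by (simp add: nth_eq_iff_index_eq)
lemma w_inj: "j < length ws \<Longrightarrow> j' < length ws \<Longrightarrow> ws!j = ws!j' \<longleftrightarrow> j = j'"
  using dws by (simp add: nth_eq_iff_index_eq)

lemma fe_meas: "i < length vs \<Longrightarrow> j < length ws \<Longrightarrow> (\<lambda>pos. fe pos vs ws i j) \<in> borel_measurable (PM {..<n})"
  unfolding fe_def
  by (intro eps_meas comp_meas) (auto intro!: v_lt w_lt nx_lt lvs lws)

lemma fe_bd: "\<bar>fe pos vs ws i j\<bar> \<le> 1"
  using eps_vals[of "pos (vs!i)" "pos (vs ! nx (length vs) i)" "pos (ws!j)" "pos (ws ! nx (length ws) j)"]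
  unfolding fe_def by auto

lemma int_prod: "i < length vs \<Longrightarrow> j < length ws \<Longrightarrow> i' < length vs \<Longrightarrow> j' < length ws \<Longrightarrow>
  integrable (PM {..<n}) (\<lambda>pos. fe pos vs ws i j * fe pos vs ws i' j')"
proof -
  assume a: "i < length vs" "j < length ws" "i' < length vs" "j' < length ws"
  interpret prob_space "PM {..<n}" by (rule PM_prob)
  show ?thesis
  proof (rule integrable_const_bound[where B=1])
    show "AE x in PM {..<n}. norm (fe x vs ws i j * fe x vs ws i' j') \<le> 1"
      by (intro AE_I2) (auto simp: abs_mult intro!: mult_le_one fe_bd)
    show "(\<lambda>pos. fe pos vs ws i j * fe pos vs ws i' j') \<in> borel_measurable (PM {..<n})"
      using fe_meas a by measurable
  qed
qed


lemma zeroA: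
  assumes ij: "i < length vs" "j < length ws" "i' < length vs" "j' < length ws"
   and ne: "i' \<noteq> i" "i' \<noteq> nx (length vs) i" "i' \<noteq> pv (length vs) i"
  shows "(\<integral>pos. fe pos vs ws i j * fe pos vs ws i' j' \<partial>PM {..<n}) = 0"
proof -
  let ?k = "length vs" and ?l = "length ws"
  have n1: "nx ?k i < ?k" "nx ?k i' < ?k" "nx ?l j < ?l" "nx ?l j' < ?l" using nx_lt lvs lws by auto
  have ne2: "nx ?k i' \<noteq> i" using ne(3) pv_nx[OF lvs ij(3)] by metis
  have ne3: "nx ?k i' \<noteq> nx ?k i" using ne(1) nx_inj[OF lvs ij(3) ij(1)] by metis
  have d: "vs!i' \<noteq> vs!i" "vs!i' \<noteq> vs!nx ?k i" "vs!nx ?k i' \<noteq> vs!i" "vs!nx ?k i' \<noteq> vs!nx ?k i"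
    "vs!i \<noteq> vs!nx ?k i"
    using v_inj[OF ij(3) ij(1)] v_inj[OF ij(3) n1(1)] v_inj[OF n1(2) ij(1)] v_inj[OF n1(2) n1(1)]
      v_inj[OF ij(1) n1(1)] ne ne2 ne3 nx_ne[OF lvs ij(1)] by auto
  have w: "ws!j \<noteq> vs!i" "ws!j \<noteq> vs!nx ?k i" "ws!nx ?l j \<noteq> vs!i" "ws!nx ?l j \<noteq> vs!nx ?k i"
    "ws!j' \<noteq> vs!i" "ws!j' \<noteq> vs!nx ?k i" "ws!nx ?l j' \<noteq> vs!i" "ws!nx ?l j' \<noteq> vs!nx ?k i"
    by (intro w_ne_v ij n1)+
  have lt: "vs!i < n" "vs!nx ?k i < n" "vs!i' < n" "vs!nx ?k i' < n" "ws!j < n" "ws!nx ?l j < n" "ws!j' < n" "ws!nx ?l j' < n"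
    by (intro v_lt w_lt ij n1)+
  show ?thesis
  proof (rule swap_zero[of "vs!i" n "vs!nx ?k i"])
    show "(\<lambda>pos. fe pos vs ws i j * fe pos vs ws i' j') \<in> borel_measurable (PM {..<n})"
      using fe_meas ij by measurable
    fix \<omega> :: "nat \<Rightarrow> point"
    show "fe (\<lambda>m\<in>{..<n}. \<omega> (tau (vs!i) (vs!nx ?k i) m)) vs ws i j * fe (\<lambda>m\<in>{..<n}. \<omega> (tau (vs!i) (vs!nx ?k i) m)) vs ws i' j'
      = - (fe \<omega> vs ws i j * fe \<omega> vs ws i' j')"
      unfolding fe_def using d w lt by (simp add: tau_def eps_swap1[of "\<omega> (vs!nx ?k i)" "\<omega> (vs!i)"])
  qed (use lt in auto)
qed

lemma zeroB:
  assumes ij: "i < length vs" "j < length ws" "i' < length vs" "j' < length ws"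
   and ne: "j' \<noteq> j" "j' \<noteq> nx (length ws) j" "j' \<noteq> pv (length ws) j"
  shows "(\<integral>pos. fe pos vs ws i j * fe pos vs ws i' j' \<partial>PM {..<n}) = 0"
proof -
  let ?k = "length vs" and ?l = "length ws"
  have n1: "nx ?k i < ?k" "nx ?k i' < ?k" "nx ?l j < ?l" "nx ?l j' < ?l" using nx_lt lvs lws by auto
  have ne2: "nx ?l j' \<noteq> j" using ne(3) pv_nx[OF lws ij(4)] by metis
  have ne3: "nx ?l j' \<noteq> nx ?l j" using ne(1) nx_inj[OF lws ij(4) ij(2)] by metis
  have d: "ws!j' \<noteq> ws!j" "ws!j' \<noteq> ws!nx ?l j" "ws!nx ?l j' \<noteq> ws!j" "ws!nx ?l j' \<noteq> ws!nx ?l j"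
    "ws!j \<noteq> ws!nx ?l j"
    using w_inj[OF ij(4) ij(2)] w_inj[OF ij(4) n1(3)] w_inj[OF n1(4) ij(2)] w_inj[OF n1(4) n1(3)]
      w_inj[OF ij(2) n1(3)] ne ne2 ne3 nx_ne[OF lws ij(2)] by auto
  have w: "vs!i \<noteq> ws!j" "vs!i \<noteq> ws!nx ?l j" "vs!nx ?k i \<noteq> ws!j" "vs!nx ?k i \<noteq> ws!nx ?l j"
    "vs!i' \<noteq> ws!j" "vs!i' \<noteq> ws!nx ?l j" "vs!nx ?k i' \<noteq> ws!j" "vs!nx ?k i' \<noteq> ws!nx ?l j"
    by (intro v_ne_w ij n1)+
  have lt: "vs!i < n" "vs!nx ?k i < n" "vs!i' < n" "vs!nx ?k i' < n" "ws!j < n" "ws!nx ?l j < n" "ws!j' < n" "ws!nx ?l j' < n"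
    by (intro v_lt w_lt ij n1)+
  show ?thesis
  proof (rule swap_zero[of "ws!j" n "ws!nx ?l j"])
    show "(\<lambda>pos. fe pos vs ws i j * fe pos vs ws i' j') \<in> borel_measurable (PM {..<n})"
      using fe_meas ij by measurable
    fix \<omega> :: "nat \<Rightarrow> point"
    show "fe (\<lambda>m\<in>{..<n}. \<omega> (tau (ws!j) (ws!nx ?l j) m)) vs ws i j * fe (\<lambda>m\<in>{..<n}. \<omega> (tau (ws!j) (ws!nx ?l j) m)) vs ws i' j'
      = - (fe \<omega> vs ws i j * fe \<omega> vs ws i' j')"
      unfolding fe_def using d w lt by (simp add: tau_def eps_swap2[of _ _ "\<omega> (ws!nx ?l j)" "\<omega> (ws!j)"])
  qed (use lt in auto)
qed


lemma row:
  assumes ij: "i < length vs" "j < length ws"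
  shows "(\<Sum>i'<length vs. \<Sum>j'<length ws. \<integral>pos. fe pos vs ws i j * fe pos vs ws i' j' \<partial>PM {..<n}) = 2 * const_q"
proof -
  let ?k = "length vs" and ?l = "length ws"
  define T where "T i' j' = (\<integral>pos. fe pos vs ws i j * fe pos vs ws i' j' \<partial>PM {..<n})" for i' j'
  define Si where "Si = {i, nx ?k i, pv ?k i}"
  define Sj where "Sj = {j, nx ?l j, pv ?l j}"
  have Si: "Si \<subseteq> {..<?k}" using ij nx_lt pv_lt lvs by (auto simp: Si_def)
  have Sj: "Sj \<subseteq> {..<?l}" using ij nx_lt pv_lt lws by (auto simp: Sj_def)
  have "(\<Sum>i'<?k. \<Sum>j'<?l. T i' j') = (\<Sum>i'\<in>Si. \<Sum>j'<?l. T i' j')"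
  proof (rule sum.mono_neutral_right)
    show "\<forall>i'\<in>{..<?k} - Si. (\<Sum>j'<?l. T i' j') = 0"
      using ij unfolding T_def Si_def by (auto intro!: sum.neutral zeroA)
  qed (use Si in auto)
  also have "\<dots> = (\<Sum>i'\<in>Si. \<Sum>j'\<in>Sj. T i' j')"
  proof (rule sum.cong[OF refl], rule sum.mono_neutral_right)
    fix i' assume "i' \<in> Si"
    then have "i' < ?k" using Si by auto
    then show "\<forall>j'\<in>{..<?l} - Sj. T i' j' = 0"
      using ij unfolding T_def Sj_def by (auto intro!: zeroB)
  qed (use Sj in auto)
  also have "\<dots> = 2 * const_q"
  proof -
    have k3: "3 \<le> ?k" and l3: "3 \<le> ?l" using lvs lws .
    have idx: "nx ?k i < ?k" "pv ?k i < ?k" "nx ?k (nx ?k i) < ?k" "nx ?l j < ?l" "pv ?l j < ?l" "nx ?l (nx ?l j) < ?l"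
      using nx_lt pv_lt k3 l3 by auto
    have ine: "nx ?k i \<noteq> i" "pv ?k i \<noteq> i" "pv ?k i \<noteq> nx ?k i" "nx ?k (nx ?k i) \<noteq> i" "nx ?k (nx ?k i) \<noteq> nx ?k i"
      using nx_ne[OF k3 ij(1)] pv_ne[OF k3 ij(1)] pv_ne_nx[OF k3 ij(1)] nx_nx_ne[OF k3 ij(1)] nx_ne[OF k3 idx(1)] by auto
    have jne: "nx ?l j \<noteq> j" "pv ?l j \<noteq> j" "pv ?l j \<noteq> nx ?l j" "nx ?l (nx ?l j) \<noteq> j" "nx ?l (nx ?l j) \<noteq> nx ?l j"
      using nx_ne[OF l3 ij(2)] pv_ne[OF l3 ij(2)] pv_ne_nx[OF l3 ij(2)] nx_nx_ne[OF l3 ij(2)] nx_ne[OF l3 idx(4)] by auto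
    have sumS: "(\<Sum>i'\<in>Si. \<Sum>j'\<in>Sj. T i' j') =
      T i j + T i (nx ?l j) + T i (pv ?l j) + T (nx ?k i) j + T (nx ?k i) (nx ?l j) + T (nx ?k i) (pv ?l j)
      + T (pv ?k i) j + T (pv ?k i) (nx ?l j) + T (pv ?k i) (pv ?l j)"
      unfolding Si_def Sj_def using ine jne by (simp add: algebra_simps)
    define A where "A = vs!i"
    define B where "B = vs!nx ?k i"
    define C where "C = vs!nx ?k (nx ?k i)"
    define Z where "Z = vs!pv ?k i"
    define P where "P = ws!j"
    define Q where "Q = ws!nx ?l j"
    define R where "R = ws!nx ?l (nx ?l j)"
    define W where "W = ws!pv ?l j"
    have vne: "A \<noteq> B" "A \<noteq> C" "B \<noteq> C" "Z \<noteq> A" "Z \<noteq> B"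
      unfolding A_def B_def C_def Z_def using v_inj ij idx ine by (metis)+
    have wne: "P \<noteq> Q" "P \<noteq> R" "Q \<noteq> R" "W \<noteq> P" "W \<noteq> Q"
      unfolding P_def Q_def R_def W_def using w_inj ij idx jne by (metis)+
    have vw: "A \<noteq> P" "A \<noteq> Q" "A \<noteq> R" "A \<noteq> W"
       "B \<noteq> P" "B \<noteq> Q" "B \<noteq> R" "B \<noteq> W"
       "C \<noteq> P" "C \<noteq> Q" "C \<noteq> R" "C \<noteq> W"
       "Z \<noteq> P" "Z \<noteq> Q" "Z \<noteq> R" "Z \<noteq> W"
      unfolding A_def B_def C_def Z_def P_def Q_def R_def W_def by (intro v_ne_w ij idx)+
    have lt: "A < n" "B < n" "C < n" "Z < n" "P < n" "Q < n" "R < n" "W < n"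
      unfolding A_def B_def C_def Z_def P_def Q_def R_def W_def by (intro v_lt w_lt ij idx)+
    have npv: "nx ?k (pv ?k i) = i" "nx ?l (pv ?l j) = j" using nx_pv k3 l3 ij by auto
    have fe: "\<And>\<omega>. fe \<omega> vs ws i j = eps (\<omega> A) (\<omega> B) (\<omega> P) (\<omega> Q)"
      "\<And>\<omega>. fe \<omega> vs ws i (nx ?l j) = eps (\<omega> A) (\<omega> B) (\<omega> Q) (\<omega> R)"
      "\<And>\<omega>. fe \<omega> vs ws i (pv ?l j) = eps (\<omega> A) (\<omega> B) (\<omega> W) (\<omega> P)"
      "\<And>\<omega>. fe \<omega> vs ws (nx ?k i) j = eps (\<omega> B) (\<omega> C) (\<omega> P) (\<omega> Q)"
      "\<And>\<omega>. fe \<omega> vs ws (nx ?k i) (nx ?l j) = eps (\<omega> B) (\<omega> C) (\<omega> Q) (\<omega> R)"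
      "\<And>\<omega>. fe \<omega> vs ws (nx ?k i) (pv ?l j) = eps (\<omega> B) (\<omega> C) (\<omega> W) (\<omega> P)"
      "\<And>\<omega>. fe \<omega> vs ws (pv ?k i) j = eps (\<omega> Z) (\<omega> A) (\<omega> P) (\<omega> Q)"
      "\<And>\<omega>. fe \<omega> vs ws (pv ?k i) (nx ?l j) = eps (\<omega> Z) (\<omega> A) (\<omega> Q) (\<omega> R)"
      "\<And>\<omega>. fe \<omega> vs ws (pv ?k i) (pv ?l j) = eps (\<omega> Z) (\<omega> A) (\<omega> W) (\<omega> P)"
      unfolding fe_def A_def B_def C_def Z_def P_def Q_def R_def W_def npv by simp_all
    have t1: "T i j = 2 * const_s"
      unfolding T_def fe power2_eq_square[symmetric]
      by (rule pat_s) (use vne wne vw lt in auto)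
    have t2: "T i (nx ?l j) = const_u"
      unfolding T_def fe by (rule pat_u) (use vne wne vw lt in auto)
    have t3: "T i (pv ?l j) = const_u"
      unfolding T_def fe by (subst mult.commute, rule pat_u) (use vne wne vw lt in auto)
    have t4: "T (nx ?k i) j = const_u"
      unfolding T_def fe eps_sym[of "_ (A::nat)"] eps_sym[of "_ (B::nat)"]
      by (rule pat_u) (use vne wne vw lt in auto)
    have t5: "T (pv ?k i) j = const_u"
      unfolding T_def fe eps_sym[of "_ (A::nat)"] eps_sym[of "_ (Z::nat)"]
      by (subst mult.commute, rule pat_u) (use vne wne vw lt in auto)
    have t6: "T (nx ?k i) (nx ?l j) = const_v"
      unfolding T_def fe by (rule pat_v) (use vne wne vw lt in auto)
    have t7: "T (nx ?k i) (pv ?l j) = const_v"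
    proof -
      have "\<And>\<omega>. eps (\<omega> A) (\<omega> B) (\<omega> P) (\<omega> Q) * eps (\<omega> B) (\<omega> C) (\<omega> W) (\<omega> P)
          = eps (\<omega> A) (\<omega> B) (\<omega> Q) (\<omega> P) * eps (\<omega> B) (\<omega> C) (\<omega> P) (\<omega> W)"
        by (metis eps_swap2 minus_mult_minus)
      then show ?thesis unfolding T_def fe by simp (rule pat_v, use vne wne vw lt in auto)
    qed
    have t8: "T (pv ?k i) (nx ?l j) = const_v"
    proof -
      have "\<And>\<omega>. eps (\<omega> A) (\<omega> B) (\<omega> P) (\<omega> Q) * eps (\<omega> Z) (\<omega> A) (\<omega> Q) (\<omega> R)
          = eps (\<omega> Z) (\<omega> A) (\<omega> R) (\<omega> Q) * eps (\<omega> A) (\<omega> B) (\<omega> Q) (\<omega> P)"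
        by (metis eps_swap2 minus_mult_minus mult.commute)
      then show ?thesis unfolding T_def fe by simp (rule pat_v, use vne wne vw lt in auto)
    qed
    have t9: "T (pv ?k i) (pv ?l j) = const_v"
      unfolding T_def fe by (subst mult.commute, rule pat_v) (use vne wne vw lt in auto)
    show ?thesis unfolding sumS t1 t2 t3 t4 t5 t6 t7 t8 t9 const_q_def by simp
  qed
  finally show ?thesis unfolding T_def .
qed


lemma core: "(\<integral>pos. (lk_list pos vs ws)^2 \<partial>PM {..<n}) = const_q / 2 * length vs * length ws"
proof -
  have "(\<integral>pos. (lk_list pos vs ws)^2 \<partial>PM {..<n}) = (\<integral>pos. 1/4 * (\<Sum>i<length vs. \<Sum>j<length ws.
   \<Sum>i'<length vs. \<Sum>j'<length ws. fe pos vs ws i j * fe pos vs ws i' j') \<partial>PM {..<n})"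
    by (simp only: lk_sq)
  also have "\<dots> = 1/4 * (\<Sum>i<length vs. \<Sum>j<length ws.
   \<Sum>i'<length vs. \<Sum>j'<length ws. \<integral>pos. fe pos vs ws i j * fe pos vs ws i' j' \<partial>PM {..<n})"
  proof -
    let ?M = "PM {..<n}" and ?f = "\<lambda>i j i' j' pos. fe pos vs ws i j * fe pos vs ws i' j'"
    have i4: "\<And>i j i'. i < length vs \<Longrightarrow> j < length ws \<Longrightarrow> i' < length vs \<Longrightarrow>
        (\<integral>pos. (\<Sum>j'<length ws. ?f i j i' j' pos) \<partial>?M) = (\<Sum>j'<length ws. \<integral>pos. ?f i j i' j' pos \<partial>?M)"
      by (subst Bochner_Integration.integral_sum) (auto intro: int_prod)
    have i3: "\<And>i j. i < length vs \<Longrightarrow> j < length ws \<Longrightarrow>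
        (\<integral>pos. (\<Sum>i'<length vs. \<Sum>j'<length ws. ?f i j i' j' pos) \<partial>?M) = (\<Sum>i'<length vs. \<integral>pos. (\<Sum>j'<length ws. ?f i j i' j' pos) \<partial>?M)"
      by (subst Bochner_Integration.integral_sum) (auto intro!: Bochner_Integration.integrable_sum int_prod)
    have i2: "\<And>i. i < length vs \<Longrightarrow>
        (\<integral>pos. (\<Sum>j<length ws. \<Sum>i'<length vs. \<Sum>j'<length ws. ?f i j i' j' pos) \<partial>?M) = (\<Sum>j<length ws. \<integral>pos. (\<Sum>i'<length vs. \<Sum>j'<length ws. ?f i j i' j' pos) \<partial>?M)"
      by (subst Bochner_Integration.integral_sum) (auto intro!: Bochner_Integration.integrable_sum int_prod)
    have n2: "\<And>i j. i < length vs \<Longrightarrow> j < length ws \<Longrightarrow> integrable ?M (\<lambda>pos. \<Sum>i'<length vs. \<Sum>j'<length ws. ?f i j i' j' pos)"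
      by (intro Bochner_Integration.integrable_sum int_prod) auto
    have n3: "\<And>i. i < length vs \<Longrightarrow> integrable ?M (\<lambda>pos. \<Sum>j<length ws. \<Sum>i'<length vs. \<Sum>j'<length ws. ?f i j i' j' pos)"
      by (intro Bochner_Integration.integrable_sum n2) auto
    have i1: "(\<integral>pos. (\<Sum>i<length vs. \<Sum>j<length ws. \<Sum>i'<length vs. \<Sum>j'<length ws. ?f i j i' j' pos) \<partial>?M) = (\<Sum>i<length vs. \<integral>pos. (\<Sum>j<length ws. \<Sum>i'<length vs. \<Sum>j'<length ws. ?f i j i' j' pos) \<partial>?M)"
      by (rule Bochner_Integration.integral_sum) (auto intro: n3)
    show ?thesis
      by (simp add: i1 i2 i3 i4)
  qed
  also have "\<dots> = 1/4 * (\<Sum>i<length vs. \<Sum>j<length ws. 2 * const_q)"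
    using row by simp
  finally show ?thesis by simp
qed

end


lemma cyc_edges_img: "cyc_edges us = (\<lambda>m. {us!m, us ! nx (length us) m}) ` {..<length us}"
  unfolding cyc_edges_def nx_def by auto

lemma card_cyc:
  assumes "distinct us" "3 \<le> length us"
  shows "card (cyc_edges us) = length us"
proof -
  let ?k = "length us"
  have "inj_on (\<lambda>m. {us!m, us ! nx ?k m}) {..<?k}"
  proof (rule inj_onI)
    fix m m' assume m: "m \<in> {..<?k}" "m' \<in> {..<?k}" and e: "{us!m, us ! nx ?k m} = {us!m', us ! nx ?k m'}"
    have lt: "nx ?k m < ?k" "nx ?k m' < ?k" using nx_lt assms(2) by auto
    have inj: "\<And>a b. a < ?k \<Longrightarrow> b < ?k \<Longrightarrow> us!a = us!b \<longleftrightarrow> a = b"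
      using assms(1) by (simp add: nth_eq_iff_index_eq)
    from e have "(us!m = us!m' \<and> us ! nx ?k m = us ! nx ?k m') \<or> (us!m = us ! nx ?k m' \<and> us ! nx ?k m = us!m')"
      by (auto simp: doubleton_eq_iff)
    then have "m = m' \<or> (m = nx ?k m' \<and> nx ?k m = m')"
      using inj m lt by auto
    then show "m = m'" using nx_nx_ne[OF assms(2)] m by auto
  qed
  then show ?thesis unfolding cyc_edges_img by (simp add: card_image)
qed

lemma Union_cyc:
  assumes "3 \<le> length us"
  shows "\<Union>(cyc_edges us) = set us"
proof
  show "\<Union>(cyc_edges us) \<subseteq> set us"
    unfolding cyc_edges_img using nx_lt[OF assms] by auto
  show "set us \<subseteq> \<Union>(cyc_edges us)"
  proof
    fix x assume "x \<in> set us"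
    then obtain m where "m < length us" "x = us!m" by (auto simp: in_set_conv_nth)
    then show "x \<in> \<Union>(cyc_edges us)" unfolding cyc_edges_img by blast
  qed
qed

lemma cycle_list_iff:
  "is_cycle_list (all_edges n) us \<longleftrightarrow> distinct us \<and> 3 \<le> length us \<and> set us \<subseteq> {..<n}"
proof
  assume a: "is_cycle_list (all_edges n) us"
  then have d: "distinct us" "3 \<le> length us" and s: "cyc_edges us \<subseteq> all_edges n"
    unfolding is_cycle_list_def by auto
  have "set us = \<Union>(cyc_edges us)" using Union_cyc[OF d(2)] by simp
  also have "\<dots> \<subseteq> \<Union>(all_edges n)" using s by auto
  also have "\<dots> \<subseteq> {..<n}" unfolding all_edges_def by auto
  finally show "distinct us \<and> 3 \<le> length us \<and> set us \<subseteq> {..<n}" using d by auto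
next
  assume a: "distinct us \<and> 3 \<le> length us \<and> set us \<subseteq> {..<n}"
  have "cyc_edges us \<subseteq> all_edges n"
  proof
    fix e assume "e \<in> cyc_edges us"
    then obtain m where m: "m < length us" "e = {us!m, us ! nx (length us) m}" unfolding cyc_edges_img by auto
    have lt: "nx (length us) m < length us" using nx_lt a by auto
    have "us!m \<noteq> us ! nx (length us) m" using a m lt nx_ne[of "length us" m] by (simp add: nth_eq_iff_index_eq)
    moreover have "us!m < n" "us ! nx (length us) m < n" using a m lt nth_mem by (metis lessThan_iff subsetD)+
    ultimately show "e \<in> all_edges n" unfolding all_edges_def m by blast
  qed
  then show "is_cycle_list (all_edges n) us" unfolding is_cycle_list_def using a by auto
qed


lemma img_perm:
  assumes "\<sigma> ` {..<k} \<subseteq> {..<k}" "inj_on \<sigma> {..<k}"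
  shows "(\<lambda>m. f (\<sigma> m)) ` {..<(k::nat)} = f ` {..<k}"
proof -
  have "\<sigma> ` {..<k} = {..<k}" using endo_inj_surj[OF _ assms] by simp
  then show ?thesis by (metis image_image)
qed

lemma cyc_rotate:
  assumes "3 \<le> length us"
  shows "cyc_edges (rotate j us) = cyc_edges us"
proof -
  let ?k = "length us"
  have k: "0 < ?k" using assms by auto
  have e: "\<And>m. m < ?k \<Longrightarrow> {rotate j us ! m, rotate j us ! nx ?k m} = (\<lambda>t. {us!t, us ! nx ?k t}) ((j + m) mod ?k)"
  proof -
    fix m assume m: "m < ?k"
    have "(j + nx ?k m) mod ?k = nx ?k ((j + m) mod ?k)"
      unfolding nx_def by (simp add: mod_add_right_eq mod_add_left_eq add.assoc mod_Suc_eq)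
    then show "{rotate j us ! m, rotate j us ! nx ?k m} = (\<lambda>t. {us!t, us ! nx ?k t}) ((j + m) mod ?k)"
      using m nx_lt[OF assms] by (simp add: nth_rotate)
  qed
  have inj: "inj_on (\<lambda>m. (j + m) mod ?k) {..<?k}"
  proof (rule inj_onI)
    fix a b assume ab: "a \<in> {..<?k}" "b \<in> {..<?k}" "(j + a) mod ?k = (j + b) mod ?k"
    then obtain q1 q2 where "j + a + ?k * q1 = j + b + ?k * q2" unfolding nat_mod_eq_iff by blast
    then have "a mod ?k = b mod ?k" unfolding nat_mod_eq_iff by auto
    then show "a = b" using ab by simp
  qed
  have "cyc_edges (rotate j us) = (\<lambda>m. (\<lambda>t. {us!t, us ! nx ?k t}) ((j + m) mod ?k)) ` {..<?k}"
    unfolding cyc_edges_img length_rotate using e by (auto simp: image_iff)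
  also have "\<dots> = cyc_edges us" unfolding cyc_edges_img
    by (rule img_perm) (use inj k in auto)
  finally show ?thesis .
qed

lemma cyc_rev:
  assumes "3 \<le> length us"
  shows "cyc_edges (rev us) = cyc_edges us"
proof -
  let ?k = "length us"
  let ?s = "\<lambda>m. ?k - 1 - nx ?k m"
  have e: "\<And>m. m < ?k \<Longrightarrow> {rev us ! m, rev us ! nx ?k m} = (\<lambda>t. {us!t, us ! nx ?k t}) (?s m)"
  proof -
    fix m assume m: "m < ?k"
    show "{rev us ! m, rev us ! nx ?k m} = (\<lambda>t. {us!t, us ! nx ?k t}) (?s m)"
    proof (cases "m + 1 < ?k")
      case True
      then have "nx ?k m = m + 1" "nx ?k (?k - 1 - (m + 1)) = ?k - 1 - m" using m by (auto simp: nx_eq)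
      then show ?thesis using m True by (auto simp: rev_nth nx_lt[OF assms])
    next
      case False
      then have "nx ?k m = 0" "m = ?k - 1" using m by (auto simp: nx_eq)
      moreover have "nx ?k (?k - 1) = 0" using assms by (auto simp: nx_eq)
      moreover have "rev us ! 0 = us ! (?k - 1)" using rev_nth[of 0 us] assms by (cases us) auto
      ultimately show ?thesis using m by (auto simp: rev_nth)
    qed
  qed
  have inj: "inj_on ?s {..<?k}"
  proof (rule inj_onI)
    fix a b assume ab: "a \<in> {..<?k}" "b \<in> {..<?k}" "?s a = ?s b"
    have "nx ?k a < ?k" "nx ?k b < ?k" using nx_lt[OF assms] by auto
    then have "nx ?k a = nx ?k b" using ab(3) by simp
    then show "a = b" using nx_inj[OF assms] ab by auto
  qed
  have "cyc_edges (rev us) = (\<lambda>m. (\<lambda>t. {us!t, us ! nx ?k t}) (?s m)) ` {..<?k}"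
    unfolding cyc_edges_img length_rev using e by (auto simp: image_iff)
  also have "\<dots> = cyc_edges us" unfolding cyc_edges_img
    by (rule img_perm) (use inj in auto)
  finally show ?thesis .
qed


lemma nbr:
  assumes "distinct us" "3 \<le> length us" "m < length us" "{us!m, x} \<in> cyc_edges us"
  shows "x = us ! nx (length us) m \<or> x = us ! pv (length us) m"
proof -
  let ?k = "length us"
  obtain t where t: "t < ?k" "{us!m, x} = {us!t, us ! nx ?k t}" using assms(4) unfolding cyc_edges_img by auto
  have inj: "\<And>a b. a < ?k \<Longrightarrow> b < ?k \<Longrightarrow> us!a = us!b \<longleftrightarrow> a = b"
    using assms(1) by (simp add: nth_eq_iff_index_eq)
  have lt: "nx ?k t < ?k" using nx_lt assms(2) by auto
  from t(2) have "(us!m = us!t \<and> x = us ! nx ?k t) \<or> (us!m = us ! nx ?k t \<and> x = us!t)"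
    by (auto simp: doubleton_eq_iff)
  then show ?thesis
  proof
    assume "us!m = us!t \<and> x = us ! nx ?k t"
    then show ?thesis using inj assms(3) t(1) by auto
  next
    assume a: "us!m = us ! nx ?k t \<and> x = us!t"
    then have "m = nx ?k t" using inj assms(3) lt by auto
    then have "t = pv ?k m" using pv_nx[OF assms(2) t(1)] by simp
    then show ?thesis using a by auto
  qed
qed

lemma nxpow: "0 < k \<Longrightarrow> j < k \<Longrightarrow> (nx k ^^ m) j = (j + m) mod k"
  by (induction m) (auto simp: nx_def mod_Suc_eq)

lemma pvpow: "3 \<le> k \<Longrightarrow> j < k \<Longrightarrow> m < k \<Longrightarrow> (pv k ^^ m) j = (nx k j + (k - 1 - m)) mod k"
proof (induction m)
  case 0
  have "nx k j + (k - 1) = nx k j + k - 1" using 0 by simp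
  then show ?case using pv_nx[of k j] 0 unfolding pv_def by simp
next
  case (Suc m)
  then have IH: "(pv k ^^ m) j = (nx k j + (k - 1 - m)) mod k" by simp
  have "(pv k ^^ Suc m) j = ((nx k j + (k - 1 - m)) mod k + k - 1) mod k"
    using IH by (simp add: pv_def)
  also have "\<dots> = ((nx k j + (k - 1 - m)) mod k + (k - 1)) mod k" using Suc by simp
  also have "\<dots> = (nx k j + (k - 1 - m) + (k - 1)) mod k" by (simp add: mod_add_left_eq)
  also have "nx k j + (k - 1 - m) + (k - 1) = (nx k j + (k - 1 - Suc m)) + k" using Suc by simp
  finally show ?case by simp
qed

lemma rev_rot_nth:
  assumes "3 \<le> length us" "j < length us" "m < length us"
  shows "rev (rotate (nx (length us) j) us) ! m = us ! ((pv (length us) ^^ m) j)"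
proof -
  let ?k = "length us"
  have "rev (rotate (nx ?k j) us) ! m = rotate (nx ?k j) us ! (?k - Suc m)"
    using assms by (simp add: rev_nth)
  also have "\<dots> = us ! ((nx ?k j + (?k - Suc m)) mod ?k)" using assms by (simp add: nth_rotate)
  also have "\<dots> = us ! ((pv ?k ^^ m) j)" using pvpow[OF assms] by simp
  finally show ?thesis .
qed

lemma fiber_shape:
  assumes us: "distinct us" "3 \<le> length us" and ws: "distinct ws" "3 \<le> length ws"
    and e: "cyc_edges ws = cyc_edges us"
  shows "\<exists>j<length us. ws = rotate j us \<or> ws = rev (rotate (nx (length us) j) us)"
proof -
  let ?k = "length us"
  have len: "length ws = ?k" using card_cyc[OF us] card_cyc[OF ws] e by simp
  have k0: "0 < ?k" using us(2) by linarith
  have "ws!0 \<in> set us" using Union_cyc[OF us(2)] Union_cyc[OF ws(2)] e ws(2) by (metis nth_mem less_le_trans zero_less_numeral)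
  then obtain j where j: "j < ?k" "ws!0 = us!j" by (auto simp: in_set_conv_nth)
  have edge: "\<And>m. m < ?k \<Longrightarrow> {ws!m, ws ! nx ?k m} \<in> cyc_edges us"
    using e len unfolding cyc_edges_img[of ws] by auto
  have nx0: "nx ?k 0 = 1" using us by (simp add: nx_def)
  have winj: "\<And>a b. a < ?k \<Longrightarrow> b < ?k \<Longrightarrow> ws!a = ws!b \<longleftrightarrow> a = b"
    using ws(1) len by (simp add: nth_eq_iff_index_eq)
  have uinj: "\<And>a b. a < ?k \<Longrightarrow> b < ?k \<Longrightarrow> us!a = us!b \<longleftrightarrow> a = b"
    using us(1) by (simp add: nth_eq_iff_index_eq)
  have step: "ws ! Suc (Suc m) = us ! nx ?k t" if "Suc (Suc m) < ?k" "ws ! Suc m = us!t" "t < ?k" "ws ! m = us ! pv ?k t" for m t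
  proof -
    have "{ws ! Suc m, ws ! Suc (Suc m)} \<in> cyc_edges us"
      using edge[of "Suc m"] that(1) by (simp add: nx_eq)
    then have "ws ! Suc (Suc m) = us ! nx ?k t \<or> ws ! Suc (Suc m) = us ! pv ?k t"
      using nbr[OF us that(3)] that(2) by simp
    moreover have "ws ! Suc (Suc m) \<noteq> ws ! m" using winj that(1) by simp
    ultimately show ?thesis using that(4) by auto
  qed
  have step2: "ws ! Suc (Suc m) = us ! pv ?k t" if "Suc (Suc m) < ?k" "ws ! Suc m = us!t" "t < ?k" "ws ! m = us ! nx ?k t" for m t
  proof -
    have "{ws ! Suc m, ws ! Suc (Suc m)} \<in> cyc_edges us"
      using edge[of "Suc m"] that(1) by (simp add: nx_eq)
    then have "ws ! Suc (Suc m) = us ! nx ?k t \<or> ws ! Suc (Suc m) = us ! pv ?k t"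
      using nbr[OF us that(3)] that(2) by simp
    moreover have "ws ! Suc (Suc m) \<noteq> ws ! m" using winj that(1) by simp
    ultimately show ?thesis using that(4) by auto
  qed
  have "ws!1 = us ! nx ?k j \<or> ws!1 = us ! pv ?k j"
    using nbr[OF us j(1)] edge[of 0] j(2) k0 nx0 by simp
  then show ?thesis
  proof
    assume w1: "ws!1 = us ! nx ?k j"
    have P: "Suc m < ?k \<longrightarrow> ws!m = us!((nx ?k ^^ m) j) \<and> ws!(Suc m) = us!((nx ?k ^^ Suc m) j)" for m
    proof (induction m)
      case 0 then show ?case using j w1 by simp
    next
      case (Suc m)
      show ?case
      proof
        assume a: "Suc (Suc m) < ?k"
        let ?t = "(nx ?k ^^ Suc m) j"
        have t: "?t < ?k" using nxpow[OF k0 j(1), of "Suc m"] k0 by simp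
        have "(nx ?k ^^ m) j < ?k" using nxpow[OF k0 j(1)] k0 by simp
        then have "pv ?k ?t = (nx ?k ^^ m) j" using pv_nx[OF us(2)] by simp
        then have "ws ! Suc (Suc m) = us ! nx ?k ?t"
          using Suc a step[of m ?t] t by simp
        then show "ws ! Suc m = us ! ((nx ?k ^^ Suc m) j) \<and> ws ! Suc (Suc m) = us ! ((nx ?k ^^ Suc (Suc m)) j)"
          using Suc a by simp
      qed
    qed
    have "ws = rotate j us"
    proof (rule nth_equalityI)
      show "length ws = length (rotate j us)" using len by simp
      fix m assume m: "m < length ws"
      then have "ws!m = us!((nx ?k ^^ m) j)"
      proof (cases m)
        case 0 then show ?thesis using j by simp
      next
        case (Suc m') then show ?thesis using P[of m'] m len by simp
      qed
      then show "ws ! m = rotate j us ! m" using m len nxpow[OF k0 j(1)] by (simp add: nth_rotate)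
    qed
    then show ?thesis using j by auto
  next
    assume w1: "ws!1 = us ! pv ?k j"
    have P: "Suc m < ?k \<longrightarrow> ws!m = us!((pv ?k ^^ m) j) \<and> ws!(Suc m) = us!((pv ?k ^^ Suc m) j)" for m
    proof (induction m)
      case 0 then show ?case using j w1 by simp
    next
      case (Suc m)
      show ?case
      proof
        assume a: "Suc (Suc m) < ?k"
        let ?t = "(pv ?k ^^ Suc m) j"
        have pvl: "(pv ?k ^^ r) j < ?k" for r by (cases r) (simp_all add: pv_lt[OF us(2)] j)
        have t: "?t < ?k" using pvl by blast
        have "nx ?k ?t = (pv ?k ^^ m) j" using nx_pv[OF us(2)] pvl by simp
        then have "ws ! Suc (Suc m) = us ! pv ?k ?t"
          using Suc a step2[of m ?t] t by simp
        then show "ws ! Suc m = us ! ((pv ?k ^^ Suc m) j) \<and> ws ! Suc (Suc m) = us ! ((pv ?k ^^ Suc (Suc m)) j)"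
          using Suc a by simp
      qed
    qed
    have "ws = rev (rotate (nx ?k j) us)"
    proof (rule nth_equalityI)
      show "length ws = length (rev (rotate (nx ?k j) us))" using len by simp
      fix m assume m: "m < length ws"
      then have "ws!m = us!((pv ?k ^^ m) j)"
      proof (cases m)
        case 0 then show ?thesis using j by simp
      next
        case (Suc m') then show ?thesis using P[of m'] m len by simp
      qed
      then show "ws ! m = rev (rotate (nx ?k j) us) ! m" using m len rev_rot_nth[OF us(2) j(1)] by simp
    qed
    then show ?thesis using j by auto
  qed
qed


definition Lst :: "nat \<Rightarrow> nat list set" where
  "Lst n = {vs. distinct vs \<and> 3 \<le> length vs \<and> set vs \<subseteq> {..<n}}"

lemma finite_Lst: "finite (Lst n)"
proof (rule finite_subset)
  show "Lst n \<subseteq> {xs. set xs \<subseteq> {..<n} \<and> length xs \<le> n}"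
  proof
    fix vs assume "vs \<in> Lst n"
    then have "distinct vs" "set vs \<subseteq> {..<n}" unfolding Lst_def by auto
    then have "length vs \<le> n" by (metis card_lessThan card_mono distinct_card finite_lessThan)
    then show "vs \<in> {xs. set xs \<subseteq> {..<n} \<and> length xs \<le> n}" using \<open>set vs \<subseteq> {..<n}\<close> by simp
  qed
  show "finite {xs. set xs \<subseteq> {..<n} \<and> length xs \<le> n}" by (rule finite_lists_length_le) simp
qed

lemma cycles_img: "cycles (all_edges n) = cyc_edges ` Lst n"
  unfolding cycles_def Lst_def cycle_list_iff by auto

lemma fiber_card:
  assumes "us \<in> Lst n"
  shows "card {ws \<in> Lst n. cyc_edges ws = cyc_edges us} = 2 * length us"
proof -
  let ?k = "length us"
  have us: "distinct us" "3 \<le> ?k" "set us \<subseteq> {..<n}" using assms unfolding Lst_def by auto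
  have k0: "0 < ?k" using us(2) by linarith
  define R where "R = (\<lambda>j. rotate j us) ` {..<?k}"
  define V where "V = (\<lambda>j. rev (rotate (nx ?k j) us)) ` {..<?k}"
  have eq: "{ws \<in> Lst n. cyc_edges ws = cyc_edges us} = R \<union> V"
  proof
    show "{ws \<in> Lst n. cyc_edges ws = cyc_edges us} \<subseteq> R \<union> V"
    proof
      fix ws assume "ws \<in> {ws \<in> Lst n. cyc_edges ws = cyc_edges us}"
      then have ws: "distinct ws" "3 \<le> length ws" "cyc_edges ws = cyc_edges us" unfolding Lst_def by auto
      from fiber_shape[OF us(1,2) ws] show "ws \<in> R \<union> V" unfolding R_def V_def by auto
    qed
    show "R \<union> V \<subseteq> {ws \<in> Lst n. cyc_edges ws = cyc_edges us}"
      unfolding R_def V_def Lst_def using us cyc_rotate[OF us(2)] cyc_rev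
      by (auto simp: distinct_rotate)
  qed
  have r0: "rotate j us ! 0 = us ! j" if "j < ?k" for j using that k0 by (simp add: nth_rotate)
  have r1: "rotate j us ! 1 = us ! nx ?k j" if "j < ?k" for j using that us(2) by (simp add: nth_rotate nx_def)
  have v0: "rev (rotate (nx ?k j) us) ! 0 = us ! j" if "j < ?k" for j using rev_rot_nth[OF us(2) that k0] by simp
  have v1: "rev (rotate (nx ?k j) us) ! 1 = us ! pv ?k j" if "j < ?k" for j using rev_rot_nth[OF us(2) that, of 1] us(2) by simp
  have uinj: "\<And>a b. a < ?k \<Longrightarrow> b < ?k \<Longrightarrow> us!a = us!b \<longleftrightarrow> a = b"
    using us(1) by (simp add: nth_eq_iff_index_eq)
  have cR: "card R = ?k" unfolding R_def
    by (subst card_image) (auto simp: inj_on_def intro: ccontr dest!: arg_cong[where f="\<lambda>l. l!0"] simp: r0 uinj)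
  have cV: "card V = ?k" unfolding V_def
  proof (subst card_image)
    show "inj_on (\<lambda>j. rev (rotate (nx ?k j) us)) {..<?k}"
    proof (rule inj_onI)
      fix x y assume xy: "x \<in> {..<?k}" "y \<in> {..<?k}" "rev (rotate (nx ?k x) us) = rev (rotate (nx ?k y) us)"
      have "rev (rotate (nx ?k x) us) ! 0 = rev (rotate (nx ?k y) us) ! 0" using xy(3) by (rule arg_cong)
      then have "us ! x = us ! y" using v0[of x] v0[of y] xy by simp
      then show "x = y" using uinj xy by simp
    qed
  qed simp
  have disj: "R \<inter> V = {}"
  proof (rule ccontr)
    assume "R \<inter> V \<noteq> {}"
    then obtain j j' where jj: "j < ?k" "j' < ?k" "rotate j us = rev (rotate (nx ?k j') us)"
      unfolding R_def V_def by auto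
    then have "us ! j = us ! j'" "us ! nx ?k j = us ! pv ?k j'"
      using r0 r1 v0 v1 by metis+
    then have "j = j'" "nx ?k j = pv ?k j'" using uinj jj nx_lt[OF us(2)] pv_lt[OF us(2)] by auto
    then show False using pv_ne_nx[OF us(2) jj(1)] by simp
  qed
  have "finite R" "finite V" unfolding R_def V_def by auto
  then show ?thesis unfolding eq using card_Un_disjoint[of R V] disj cR cV by simp
qed

lemma sum_cycles:
  "(\<Sum>C\<in>cycles (all_edges n). g C) = (\<Sum>vs\<in>Lst n. g (cyc_edges vs) / (2 * length vs))"
proof -
  have "(\<Sum>vs\<in>Lst n. g (cyc_edges vs) / (2 * length vs))
     = (\<Sum>C\<in>cyc_edges ` Lst n. \<Sum>vs\<in>{x \<in> Lst n. cyc_edges x = C}. g (cyc_edges vs) / (2 * length vs))"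
    by (rule sum.image_gen[OF finite_Lst])
  also have "\<dots> = (\<Sum>C\<in>cyc_edges ` Lst n. g C)"
  proof (rule sum.cong[OF refl])
    fix C assume "C \<in> cyc_edges ` Lst n"
    then obtain us where us: "us \<in> Lst n" "C = cyc_edges us" by auto
    have L: "length vs = length us" if "vs \<in> Lst n" "cyc_edges vs = C" for vs
    proof -
      have "length vs = card (cyc_edges vs)" using that(1) card_cyc unfolding Lst_def by simp
      also have "\<dots> = card (cyc_edges us)" using that(2) us(2) by simp
      also have "\<dots> = length us" using us(1) card_cyc unfolding Lst_def by simp
      finally show ?thesis .
    qed
    have "(\<Sum>vs\<in>{x \<in> Lst n. cyc_edges x = C}. g (cyc_edges vs) / (2 * length vs))
       = (\<Sum>vs\<in>{x \<in> Lst n. cyc_edges x = C}. g C / (2 * length us))"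
      by (rule sum.cong[OF refl]) (simp add: L)
    also have "\<dots> = g C"
    proof -
      have ne: "0 < length us" using us(1) unfolding Lst_def by auto
      have "card {x \<in> Lst n. cyc_edges x = C} = 2 * length us" using fiber_card[OF us(1)] us(2) by simp
      then show ?thesis using ne by simp
    qed
    finally show "(\<Sum>vs\<in>{x \<in> Lst n. cyc_edges x = C}. g (cyc_edges vs) / (2 * length vs)) = g C" .
  qed
  finally show ?thesis unfolding cycles_img by simp
qed


lemma finite_cycles: "finite (cycles (all_edges n))"
  unfolding cycles_img using finite_Lst by simp

lemma dcp_sum:
  "(\<Sum>(C, C')\<in>disj_cycle_pairs (all_edges n). f C C') =
   (\<Sum>vs\<in>Lst n. \<Sum>ws\<in>Lst n. if set vs \<inter> set ws = {} then f (cyc_edges vs) (cyc_edges ws) / (2 * length ws) / (2 * length vs) else 0)"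
proof -
  let ?X = "cycles (all_edges n)"
  let ?h = "\<lambda>C C'. if \<Union>C \<inter> \<Union>C' = {} then f C C' else 0"
  have d: "disj_cycle_pairs (all_edges n) = {x \<in> ?X \<times> ?X. \<Union>(fst x) \<inter> \<Union>(snd x) = {}}"
    unfolding disj_cycle_pairs_def by (rule set_eqI, simp only: mem_Collect_eq mem_Times_iff case_prod_beta, blast)
  have "(\<Sum>(C, C')\<in>disj_cycle_pairs (all_edges n). f C C') = (\<Sum>x\<in>?X \<times> ?X. ?h (fst x) (snd x))"
    unfolding d by (subst sum.inter_filter) (auto simp: finite_cycles case_prod_beta intro!: sum.cong)
  also have "\<dots> = (\<Sum>C\<in>?X. \<Sum>C'\<in>?X. ?h C C')"
    unfolding sum.cartesian_product by (simp add: case_prod_beta)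
  also have "\<dots> = (\<Sum>C\<in>?X. \<Sum>ws\<in>Lst n. ?h C (cyc_edges ws) / (2 * length ws))"
    by (rule sum.cong[OF refl]) (rule sum_cycles)
  also have "\<dots> = (\<Sum>vs\<in>Lst n. (\<Sum>ws\<in>Lst n. ?h (cyc_edges vs) (cyc_edges ws) / (2 * length ws)) / (2 * length vs))"
    by (rule sum_cycles)
  also have "\<dots> = (\<Sum>vs\<in>Lst n. \<Sum>ws\<in>Lst n. if set vs \<inter> set ws = {} then f (cyc_edges vs) (cyc_edges ws) / (2 * length ws) / (2 * length vs) else 0)"
  proof (rule sum.cong[OF refl])
    fix vs assume vs: "vs \<in> Lst n"
    show "(\<Sum>ws\<in>Lst n. ?h (cyc_edges vs) (cyc_edges ws) / (2 * length ws)) / (2 * length vs) =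
      (\<Sum>ws\<in>Lst n. if set vs \<inter> set ws = {} then f (cyc_edges vs) (cyc_edges ws) / (2 * length ws) / (2 * length vs) else 0)"
      unfolding sum_divide_distrib
    proof (rule sum.cong[OF refl])
      fix ws assume ws: "ws \<in> Lst n"
      have "\<Union>(cyc_edges vs) = set vs" "\<Union>(cyc_edges ws) = set ws"
        using vs ws Union_cyc unfolding Lst_def by auto
      then show "?h (cyc_edges vs) (cyc_edges ws) / (2 * length ws) / (2 * length vs) =
        (if set vs \<inter> set ws = {} then f (cyc_edges vs) (cyc_edges ws) / (2 * length ws) / (2 * length vs) else 0)"
        by simp
    qed
  qed
  finally show ?thesis .
qed


definition DL :: "nat \<Rightarrow> nat list set" where
  "DL n = {xs. distinct xs \<and> set xs \<subseteq> {..<n}}"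

lemma DL_len: "xs \<in> DL n \<Longrightarrow> length xs \<le> n"
  unfolding DL_def by (metis (mono_tags) card_lessThan card_mono distinct_card finite_lessThan mem_Collect_eq)

lemma finite_DL: "finite (DL n)"
proof (rule finite_subset)
  show "DL n \<subseteq> {xs. set xs \<subseteq> {..<n} \<and> length xs \<le> n}" using DL_len unfolding DL_def by auto
  show "finite {xs. set xs \<subseteq> {..<n} \<and> length xs \<le> n}" by (rule finite_lists_length_le) simp
qed

lemma card_DL_i:
  assumes "i \<le> n"
  shows "real (card {xs \<in> DL n. length xs = i}) = fact n / fact (n - i)"
proof -
  have "{xs \<in> DL n. length xs = i} = {xs. length xs = i \<and> distinct xs \<and> set xs \<subseteq> {..<n}}"
    unfolding DL_def by auto
  then have "card {xs \<in> DL n. length xs = i} = \<Prod>{n - i + 1..n}"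
    using card_lists_distinct_length_eq[of "{..<n}" i] assms by simp
  also have "\<dots> = fact n div fact (n - i)" using fact_div_fact[of "n - i" n] assms by simp
  finally have "real (card {xs \<in> DL n. length xs = i}) = real (fact n div fact (n - i))" by simp
  also have "\<dots> = real (fact n) / real (fact (n - i))"
    by (rule real_of_nat_div) (simp add: fact_dvd)
  finally show ?thesis by simp
qed

lemma pair_count:
  fixes p :: real
  shows "(\<Sum>vs\<in>Lst n. \<Sum>ws\<in>Lst n. if set vs \<inter> set ws = {} then p^(length vs + length ws) else 0)
    = (\<Sum>i = 6..n. p ^ i * (fact n / fact (n - i)) * (real i - 5))"
proof -
  let ?P = "{x \<in> Lst n \<times> Lst n. set (fst x) \<inter> set (snd x) = {}}"
  let ?Q = "Sigma (DL n) (\<lambda>xs. {3..length xs - 3})"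
  have "(\<Sum>vs\<in>Lst n. \<Sum>ws\<in>Lst n. if set vs \<inter> set ws = {} then p^(length vs + length ws) else 0)
     = (\<Sum>x\<in>Lst n \<times> Lst n. if set (fst x) \<inter> set (snd x) = {} then p^(length (fst x) + length (snd x)) else 0)"
    unfolding sum.cartesian_product by (simp add: case_prod_beta)
  also have "\<dots> = (\<Sum>x\<in>?P. p^(length (fst x) + length (snd x)))"
    by (subst sum.inter_filter) (auto simp: finite_Lst)
  also have "\<dots> = (\<Sum>x\<in>?P. (\<lambda>y. p ^ length (fst y)) ((\<lambda>x. (fst x @ snd x, length (fst x))) x))"
    by simp
  also have "\<dots> = (\<Sum>y\<in>?Q. p ^ length (fst y))"
  proof (rule sum.reindex_bij_betw)
    show "bij_betw (\<lambda>x. (fst x @ snd x, length (fst x))) ?P ?Q"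
    proof (rule bij_betw_imageI)
      show "inj_on (\<lambda>x. (fst x @ snd x, length (fst x))) ?P"
        by (rule inj_onI) (auto simp: prod_eq_iff append_eq_append_conv)
      show "(\<lambda>x. (fst x @ snd x, length (fst x))) ` ?P = ?Q"
      proof
        show "(\<lambda>x. (fst x @ snd x, length (fst x))) ` ?P \<subseteq> ?Q"
          unfolding Lst_def DL_def by auto
        show "?Q \<subseteq> (\<lambda>x. (fst x @ snd x, length (fst x))) ` ?P"
        proof
          fix y assume y: "y \<in> ?Q"
          obtain xs a where ya: "y = (xs, a)" by (cases y)
          have xs: "distinct xs" "set xs \<subseteq> {..<n}" "3 \<le> a" "a \<le> length xs - 3"
            using y unfolding ya DL_def by auto
          let ?x = "(take a xs, drop a xs)"
          have "?x \<in> ?P"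
            using xs set_take_subset[of a xs] set_drop_subset[of a xs] distinct_take[of xs a] distinct_drop[of xs a]
              unfolding Lst_def
            by (auto simp: set_take_disj_set_drop_if_distinct)
          moreover have "y = (fst ?x @ snd ?x, length (fst ?x))" using xs ya by simp
          ultimately show "y \<in> (\<lambda>x. (fst x @ snd x, length (fst x))) ` ?P" by blast
        qed
      qed
    qed
  qed
  also have "\<dots> = (\<Sum>xs\<in>DL n. \<Sum>a\<in>{3..length xs - 3}. p ^ length xs)"
    by (subst sum.Sigma) (auto simp: finite_DL case_prod_beta)
  also have "\<dots> = (\<Sum>xs\<in>DL n. p ^ length xs * real (Suc (length xs - 3) - 3))"
    by (simp add: mult.commute)
  also have "\<dots> = (\<Sum>i\<in>{..n}. \<Sum>xs\<in>{xs \<in> DL n. length xs = i}. p ^ length xs * real (Suc (length xs - 3) - 3))"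
    by (rule sum.group[symmetric]) (auto simp: finite_DL DL_len)
  also have "\<dots> = (\<Sum>i\<in>{..n}. real (card {xs \<in> DL n. length xs = i}) * (p ^ i * real (Suc (i - 3) - 3)))"
    by (rule sum.cong[OF refl]) simp
  also have "\<dots> = (\<Sum>i\<in>{..n}. p ^ i * (fact n / fact (n - i)) * real (Suc (i - 3) - 3))"
    by (rule sum.cong[OF refl]) (simp add: card_DL_i)
  also have "\<dots> = (\<Sum>i = 6..n. p ^ i * (fact n / fact (n - i)) * (real i - 5))"
  proof (rule sum.mono_neutral_cong_right)
    show "\<forall>i\<in>{..n} - {6..n}. p ^ i * (fact n / fact (n - i)) * real (Suc (i - 3) - 3) = 0" by auto
    show "\<And>i. i \<in> {6..n} \<Longrightarrow> p ^ i * (fact n / fact (n - i)) * real (Suc (i - 3) - 3) = p ^ i * (fact n / fact (n - i)) * (real i - 5)"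
      by (auto simp: of_nat_diff)
  qed auto
  finally show ?thesis .
qed


lemma binom_Pow:
  fixes p q :: real
  assumes "finite S"
  shows "(\<Sum>K\<in>Pow S. p ^ card K * q ^ card (S - K)) = (p + q) ^ card S"
  using assms
proof (induction S rule: finite_induct)
  case empty then show ?case by simp
next
  case (insert x S)
  have disj: "Pow S \<inter> insert x ` Pow S = {}" using insert.hyps by auto
  have inj: "inj_on (insert x) (Pow S)" using insert.hyps by (auto simp: inj_on_def)
  have fin: "finite (Pow S)" "finite (insert x ` Pow S)" using insert.hyps by auto
  have A: "(\<Sum>K\<in>Pow S. p ^ card K * q ^ card (insert x S - K)) = q * (\<Sum>K\<in>Pow S. p ^ card K * q ^ card (S - K))"
  proof -
    have "(\<Sum>K\<in>Pow S. p ^ card K * q ^ card (insert x S - K)) = (\<Sum>K\<in>Pow S. q * (p ^ card K * q ^ card (S - K)))"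
    proof (rule sum.cong[OF refl])
      fix K assume K: "K \<in> Pow S"
      have e: "insert x S - K = insert x (S - K)" using insert.hyps K by auto
      have "finite (S - K)" "x \<notin> S - K" using insert.hyps by auto
      then have "card (insert x (S - K)) = Suc (card (S - K))" by simp
      then show "p ^ card K * q ^ card (insert x S - K) = q * (p ^ card K * q ^ card (S - K))" unfolding e by simp
    qed
    then show ?thesis by (simp add: sum_distrib_left)
  qed
  have B: "(\<Sum>K\<in>insert x ` Pow S. p ^ card K * q ^ card (insert x S - K)) = p * (\<Sum>K\<in>Pow S. p ^ card K * q ^ card (S - K))"
  proof -
    have "(\<Sum>K\<in>insert x ` Pow S. p ^ card K * q ^ card (insert x S - K)) = (\<Sum>K\<in>Pow S. p ^ card (insert x K) * q ^ card (insert x S - insert x K))"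
      by (rule sum.reindex[OF inj, unfolded comp_def])
    also have "\<dots> = (\<Sum>K\<in>Pow S. p * (p ^ card K * q ^ card (S - K)))"
    proof (rule sum.cong[OF refl])
      fix K assume K: "K \<in> Pow S"
      have "finite K" using K insert.hyps(1) finite_subset by auto
      moreover have "x \<notin> K" using K insert.hyps(2) by auto
      ultimately have "card (insert x K) = Suc (card K)" by simp
      moreover have "insert x S - insert x K = S - K" using insert.hyps K by auto
      ultimately show "p ^ card (insert x K) * q ^ card (insert x S - insert x K) = p * (p ^ card K * q ^ card (S - K))" by simp
    qed
    finally show ?thesis by (simp add: sum_distrib_left)
  qed
  have "(\<Sum>K\<in>Pow (insert x S). p ^ card K * q ^ card (insert x S - K))
     = (\<Sum>K\<in>Pow S. p ^ card K * q ^ card (insert x S - K)) + (\<Sum>K\<in>insert x ` Pow S. p ^ card K * q ^ card (insert x S - K))"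
    unfolding Pow_insert by (rule sum.union_disjoint[OF fin disj])
  also have "\<dots> = (p + q) * (p + q) ^ card S" unfolding A B insert.IH by (simp add: algebra_simps)
  finally show ?case using insert.hyps by simp
qed

lemma sub_sum:
  fixes p :: real
  assumes "finite E" "H \<subseteq> E"
  shows "(\<Sum>G\<in>Pow E. if H \<subseteq> G then p ^ card G * (1 - p) ^ (card E - card G) else 0) = p ^ card H"
proof -
  have fH: "finite H" using assms finite_subset by blast
  have "(\<Sum>G\<in>Pow E. if H \<subseteq> G then p ^ card G * (1 - p) ^ (card E - card G) else 0)
     = (\<Sum>G\<in>{G \<in> Pow E. H \<subseteq> G}. p ^ card G * (1 - p) ^ (card E - card G))"
    by (subst sum.inter_filter) (auto simp: assms)
  also have "\<dots> = (\<Sum>K\<in>Pow (E - H). p ^ card (H \<union> K) * (1 - p) ^ (card E - card (H \<union> K)))"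
  proof -
    have inj: "inj_on ((\<union>) H) (Pow (E - H))" by (auto simp: inj_on_def)
    have img: "(\<union>) H ` Pow (E - H) = {G \<in> Pow E. H \<subseteq> G}"
    proof
      show "(\<union>) H ` Pow (E - H) \<subseteq> {G \<in> Pow E. H \<subseteq> G}" using assms by auto
      show "{G \<in> Pow E. H \<subseteq> G} \<subseteq> (\<union>) H ` Pow (E - H)"
      proof
        fix G assume "G \<in> {G \<in> Pow E. H \<subseteq> G}"
        then have "G = H \<union> (G - H)" "G - H \<in> Pow (E - H)" by auto
        then show "G \<in> (\<union>) H ` Pow (E - H)" by blast
      qed
    qed
    show ?thesis unfolding img[symmetric] by (rule sum.reindex[OF inj, unfolded comp_def])
  qed
  also have "\<dots> = (\<Sum>K\<in>Pow (E - H). p ^ card H * (p ^ card K * (1 - p) ^ card ((E - H) - K)))"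
  proof (rule sum.cong[OF refl])
    fix K assume K: "K \<in> Pow (E - H)"
    have fK: "finite K" using K assms(1) finite_subset by blast
    have c1: "card (H \<union> K) = card H + card K" using K fH fK by (subst card_Un_disjoint) auto
    have "card E - card (H \<union> K) = card (E - (H \<union> K))" using K assms by (subst card_Diff_subset) (auto intro: finite_subset)
    moreover have "E - (H \<union> K) = (E - H) - K" by auto
    ultimately show "p ^ card (H \<union> K) * (1 - p) ^ (card E - card (H \<union> K)) = p ^ card H * (p ^ card K * (1 - p) ^ card ((E - H) - K))"
      using c1 by (simp add: power_add)
  qed
  also have "\<dots> = p ^ card H * (p + (1 - p)) ^ card (E - H)"
    by (subst binom_Pow[symmetric]) (auto simp: assms sum_distrib_left)
  finally show ?thesis by simp
qed


lemma (in twocyc) int_lk: "integrable (PM {..<n}) (\<lambda>pos. (lk_list pos vs ws)^2)"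
  unfolding lk_sq
  by (intro integrable_mult_right Bochner_Integration.integrable_sum int_prod) auto

lemma orient_ok:
  assumes "C \<in> cycles (all_edges n)"
  shows "orient C \<in> Lst n" "cyc_edges (orient C) = C"
proof -
  obtain us where us: "us \<in> Lst n" "C = cyc_edges us" using assms unfolding cycles_img by auto
  have ex: "\<exists>vs. length vs \<ge> 3 \<and> distinct vs \<and> cyc_edges vs = C" using us unfolding Lst_def by auto
  have o: "length (orient C) \<ge> 3" "distinct (orient C)" "cyc_edges (orient C) = C"
    using someI_ex[OF ex] unfolding orient_def by auto
  have "set (orient C) = \<Union>C" using Union_cyc[OF o(1)] o(3) by simp
  also have "\<dots> = set us" using Union_cyc us unfolding Lst_def by auto
  finally have "set (orient C) \<subseteq> {..<n}" using us unfolding Lst_def by auto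
  then show "orient C \<in> Lst n" using o unfolding Lst_def by auto
  show "cyc_edges (orient C) = C" by (rule o(3))
qed

lemma cycles_sub:
  assumes "G \<subseteq> all_edges n"
  shows "cycles G = {C \<in> cycles (all_edges n). C \<subseteq> G}"
  using assms unfolding cycles_def is_cycle_list_def by auto

lemma dcp_sub:
  assumes "G \<subseteq> all_edges n"
  shows "disj_cycle_pairs G = {x \<in> disj_cycle_pairs (all_edges n). fst x \<union> snd x \<subseteq> G}"
  unfolding disj_cycle_pairs_def cycles_sub[OF assms] by auto

lemma finite_dcp: "finite (disj_cycle_pairs (all_edges n))"
proof (rule finite_subset)
  show "disj_cycle_pairs (all_edges n) \<subseteq> cycles (all_edges n) \<times> cycles (all_edges n)"
    unfolding disj_cycle_pairs_def by auto
  show "finite (cycles (all_edges n) \<times> cycles (all_edges n))" using finite_cycles by auto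
qed

lemma dcp_twocyc:
  assumes "x \<in> disj_cycle_pairs (all_edges n)"
  shows "twocyc n (orient (fst x)) (orient (snd x))"
    "length (orient (fst x)) = card (fst x)" "length (orient (snd x)) = card (snd x)"
proof -
  have c: "fst x \<in> cycles (all_edges n)" "snd x \<in> cycles (all_edges n)" "\<Union>(fst x) \<inter> \<Union>(snd x) = {}"
  proof -
    obtain C C' where xc: "x = (C, C')" by (cases x)
    have "C \<in> cycles (all_edges n) \<and> C' \<in> cycles (all_edges n) \<and> \<Union>C \<inter> \<Union>C' = {}"
      using assms unfolding xc disj_cycle_pairs_def by (simp only: mem_Collect_eq case_prod_conv)
    then show "fst x \<in> cycles (all_edges n)" "snd x \<in> cycles (all_edges n)" "\<Union>(fst x) \<inter> \<Union>(snd x) = {}"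
      unfolding xc by (simp_all only: fst_conv snd_conv)
  qed
  note o1 = orient_ok[OF c(1)] and o2 = orient_ok[OF c(2)]
  have u1: "\<Union>(cyc_edges (orient (fst x))) = set (orient (fst x))"
    by (rule Union_cyc) (use o1(1) in \<open>simp add: Lst_def\<close>)
  have u2: "\<Union>(cyc_edges (orient (snd x))) = set (orient (snd x))"
    by (rule Union_cyc) (use o2(1) in \<open>simp add: Lst_def\<close>)
  have u: "set (orient (fst x)) = \<Union>(fst x)" "set (orient (snd x)) = \<Union>(snd x)"
    using u1 u2 o1(2) o2(2) by metis+
  show "twocyc n (orient (fst x)) (orient (snd x))"
    using o1 o2 c(3) u unfolding Lst_def by unfold_locales auto
  show "length (orient (fst x)) = card (fst x)" using o1 card_cyc[of "orient (fst x)"] unfolding Lst_def by simp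
  show "length (orient (snd x)) = card (snd x)" using o2 card_cyc[of "orient (snd x)"] unfolding Lst_def by simp
qed

lemma int_sum_sq:
  assumes "G \<subseteq> all_edges n"
  shows "(\<integral>pos. sum_sq_lk G pos \<partial>PM {..<n}) = 1/2 * (\<Sum>x\<in>disj_cycle_pairs G. const_q / 2 * card (fst x) * card (snd x))"
proof -
  have sub: "disj_cycle_pairs G \<subseteq> disj_cycle_pairs (all_edges n)" using dcp_sub[OF assms] by auto
  have fin: "finite (disj_cycle_pairs G)" using finite_subset[OF sub finite_dcp] .
  have int: "integrable (PM {..<n}) (\<lambda>pos. (lk pos (fst x) (snd x))^2)" if "x \<in> disj_cycle_pairs G" for x
    using twocyc.int_lk[OF dcp_twocyc(1)[OF subsetD[OF sub that]]] unfolding lk_def .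
  have "(\<integral>pos. sum_sq_lk G pos \<partial>PM {..<n}) = (\<integral>pos. 1/2 * (\<Sum>x\<in>disj_cycle_pairs G. (lk pos (fst x) (snd x))^2) \<partial>PM {..<n})"
    unfolding sum_sq_lk_def by (simp add: case_prod_beta)
  also have "\<dots> = 1/2 * (\<Sum>x\<in>disj_cycle_pairs G. \<integral>pos. (lk pos (fst x) (snd x))^2 \<partial>PM {..<n})"
    by (subst integral_mult_right_zero) (simp add: Bochner_Integration.integral_sum int)
  also have "\<dots> = 1/2 * (\<Sum>x\<in>disj_cycle_pairs G. const_q / 2 * card (fst x) * card (snd x))"
  proof -
    have "(\<integral>pos. (lk pos (fst x) (snd x))^2 \<partial>PM {..<n}) = const_q / 2 * card (fst x) * card (snd x)"
      if "x \<in> disj_cycle_pairs G" for x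
    proof -
      have x: "x \<in> disj_cycle_pairs (all_edges n)" using sub that by auto
      show ?thesis unfolding lk_def twocyc.core[OF dcp_twocyc(1)[OF x]] dcp_twocyc(2,3)[OF x] by simp
    qed
    then have "(\<Sum>x\<in>disj_cycle_pairs G. \<integral>pos. (lk pos (fst x) (snd x))^2 \<partial>PM {..<n}) = (\<Sum>x\<in>disj_cycle_pairs G. const_q / 2 * card (fst x) * card (snd x))"
      by (rule sum.cong[OF refl])
    then show ?thesis by simp
  qed
  finally show ?thesis .
qed


lemma finite_E: "finite (all_edges n)"
proof (rule finite_subset)
  show "all_edges n \<subseteq> Pow {..<n}" unfolding all_edges_def by auto
qed simp

lemma cyc_sub_E: "C \<in> cycles (all_edges n) \<Longrightarrow> C \<subseteq> all_edges n"
  unfolding cycles_def is_cycle_list_def by auto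

lemma dcp_card:
  assumes "x \<in> disj_cycle_pairs (all_edges n)"
  shows "card (fst x \<union> snd x) = card (fst x) + card (snd x)" "fst x \<union> snd x \<subseteq> all_edges n"
proof -
  obtain C C' where xc: "x = (C, C')" by (cases x)
  have c: "C \<in> cycles (all_edges n) \<and> C' \<in> cycles (all_edges n) \<and> \<Union>C \<inter> \<Union>C' = {}"
    using assms unfolding xc disj_cycle_pairs_def by (simp only: mem_Collect_eq case_prod_conv)
  then have sub: "C \<subseteq> all_edges n" "C' \<subseteq> all_edges n" using cyc_sub_E by auto
  have "C \<inter> C' = {}"
  proof (rule ccontr)
    assume "C \<inter> C' \<noteq> {}"
    then obtain e where e: "e \<in> C" "e \<in> C'" by auto
    then have "e \<subseteq> \<Union>C \<inter> \<Union>C'" by auto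
    then have "e = {}" using c by auto
    moreover have "e \<noteq> {}" using sub e unfolding all_edges_def by auto
    ultimately show False by simp
  qed
  moreover have "finite C" "finite C'" using finite_subset[OF sub(1) finite_E] finite_subset[OF sub(2) finite_E] by auto
  ultimately show "card (fst x \<union> snd x) = card (fst x) + card (snd x)" unfolding xc by (simp add: card_Un_disjoint)
  show "fst x \<union> snd x \<subseteq> all_edges n" using sub xc by simp
qed

theorem mainTheorem7:
  fixes n :: nat and p :: real
  assumes "n \<ge> 6" and "0 < p" and "p < 1"
  shows "mean_sum_sq_lk n p =
    const_q / 16 * (\<Sum>i = 6..n. p ^ i * (fact n / fact (n - i)) * (real i - 5))"
proof -
  let ?E = "all_edges n"
  let ?D = "disj_cycle_pairs ?E"
  define w where "w G = p ^ card G * (1 - p) ^ (card ?E - card G)" for G :: "nat set set"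
  define h where "h x = const_q / 2 * card (fst x) * card (snd x)" for x :: "nat set set \<times> nat set set"
  have "mean_sum_sq_lk n p = (\<Sum>G\<in>Pow ?E. w G * (1/2 * (\<Sum>x\<in>disj_cycle_pairs G. h x)))"
    unfolding mean_sum_sq_lk_def w_def h_def by (rule sum.cong[OF refl]) (simp add: int_sum_sq)
  also have "\<dots> = (\<Sum>G\<in>Pow ?E. \<Sum>x\<in>?D. 1/2 * ((if fst x \<union> snd x \<subseteq> G then w G else 0) * h x))"
  proof (rule sum.cong[OF refl])
    fix G assume G: "G \<in> Pow ?E"
    have "(\<Sum>x\<in>disj_cycle_pairs G. h x) = (\<Sum>x\<in>?D. if fst x \<union> snd x \<subseteq> G then h x else 0)"
      unfolding dcp_sub[of G n, OF G[unfolded Pow_iff]] by (rule sum.inter_filter[OF finite_dcp])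
    then show "w G * (1/2 * (\<Sum>x\<in>disj_cycle_pairs G. h x)) = (\<Sum>x\<in>?D. 1/2 * ((if fst x \<union> snd x \<subseteq> G then w G else 0) * h x))"
      by (auto simp: sum_distrib_left intro!: sum.cong)
  qed
  also have "\<dots> = (\<Sum>x\<in>?D. \<Sum>G\<in>Pow ?E. 1/2 * ((if fst x \<union> snd x \<subseteq> G then w G else 0) * h x))"
    by (rule sum.swap)
  also have "\<dots> = (\<Sum>x\<in>?D. 1/2 * (p ^ (card (fst x) + card (snd x)) * h x))"
  proof (rule sum.cong[OF refl])
    fix x assume x: "x \<in> ?D"
    have "(\<Sum>G\<in>Pow ?E. 1/2 * ((if fst x \<union> snd x \<subseteq> G then w G else 0) * h x))
       = 1/2 * ((\<Sum>G\<in>Pow ?E. if fst x \<union> snd x \<subseteq> G then w G else 0) * h x)"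
      by (simp add: sum_distrib_left sum_distrib_right)
    also have "(\<Sum>G\<in>Pow ?E. if fst x \<union> snd x \<subseteq> G then w G else 0) = p ^ card (fst x \<union> snd x)"
      unfolding w_def by (rule sub_sum[OF finite_E dcp_card(2)[OF x]])
    finally show "(\<Sum>G\<in>Pow ?E. 1/2 * ((if fst x \<union> snd x \<subseteq> G then w G else 0) * h x)) = 1/2 * (p ^ (card (fst x) + card (snd x)) * h x)"
      using dcp_card(1)[OF x] by simp
  qed
  also have "\<dots> = const_q / 4 * (\<Sum>(C, C')\<in>?D. real (card C) * real (card C') * p ^ (card C + card C'))"
    unfolding h_def by (simp add: sum_distrib_left case_prod_beta mult_ac)
  also have "(\<Sum>(C, C')\<in>?D. real (card C) * real (card C') * p ^ (card C + card C'))
    = (\<Sum>vs\<in>Lst n. \<Sum>ws\<in>Lst n. if set vs \<inter> set ws = {} then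
         real (card (cyc_edges vs)) * real (card (cyc_edges ws)) * p ^ (card (cyc_edges vs) + card (cyc_edges ws)) / (2 * length ws) / (2 * length vs) else 0)"
    by (rule dcp_sum)
  also have "\<dots> = 1/4 * (\<Sum>vs\<in>Lst n. \<Sum>ws\<in>Lst n. if set vs \<inter> set ws = {} then p^(length vs + length ws) else 0)"
    unfolding sum_distrib_left
  proof (intro sum.cong refl)
    fix vs ws assume vs: "vs \<in> Lst n" and ws: "ws \<in> Lst n"
    have cv: "card (cyc_edges vs) = length vs" "length vs > 0" using vs card_cyc unfolding Lst_def by auto
    have cw: "card (cyc_edges ws) = length ws" "length ws > 0" using ws card_cyc unfolding Lst_def by auto
    show "(if set vs \<inter> set ws = {} then real (card (cyc_edges vs)) * real (card (cyc_edges ws)) *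
        p ^ (card (cyc_edges vs) + card (cyc_edges ws)) / (2 * length ws) / (2 * length vs) else 0) =
       1/4 * (if set vs \<inter> set ws = {} then p^(length vs + length ws) else 0)"
      unfolding cv cw using cv(2) cw(2) by (simp add: field_simps)
  qed
  also have "\<dots> = 1/4 * (\<Sum>i = 6..n. p ^ i * (fact n / fact (n - i)) * (real i - 5))"
    by (simp only: pair_count)
  finally show ?thesis by simp
qed


end
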